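(* Let $c \in (0,1/2]$, $t_1 \in [0,1-2c]$, $t_2 \in [t_1+c,1-c]$, and $p,q \in (0,1)$ with $p\neq q$. Define $\Phi_1:\mathbb{R}\to\mathbb{R}\cup\{\infty\}$ by \[ \Phi_1(r) = \frac{t_2-t_1}{1-c}\,\frac{c(p-q)^2+(1-c)(p+q-2r)}{(1-c)+c(p+q-2r)}. \] Then: (1) $\Phi_1$ is a rational function of $r$ with one simple pole at $\frac{p+q}{2}+\frac{1-c}{2c}$, which lies strictly to the right of the interval $\Lambda_{p,q}$; (2) $\Phi_1$ has one root, at $\frac{p+q}{2}+\frac{c(p-q)^2}{2(1-c)}$, which lies strictly to the right of $\Lambda_{p,q}$ and strictly to the left of the pole; (3) $\Phi_1$ is differentiable at every $r\in\mathbb{R}$ other than the pole, with \[ \Phi_1'(r) = 2(t_2-t_1)\frac{c^2(p-q)^2-(1-c)^2}{(1-c)\big(1-c+c(p+q-2r)\big)^2} < 0, \] so $\Phi_1$ is strictly decreasing on $\Lambda_{p,q}$; (4) $\Phi_1$ is strictly positive on $\Lambda_{p,q}$.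
   Context: $\Lambda_{p,q}$ denotes the open interval $\{r\in\mathbb{R}: \max\{0,p+q-1\}<r<\min\{p,q\}\}$. *)

theory Defs
  imports "HOL-Analysis.Analysis"
begin

definition Lambda :: "real \<Rightarrow> real \<Rightarrow> real set" where
  "Lambda p q = {max 0 (p + q - 1) <..< min p q}"

text \<open>Phi_1 as a real function; at the pole (denominator 0) HOL division yields 0,
  which stands in for the value infinity of the paper.\<close>
definition Phi1 :: "real \<Rightarrow> real \<Rightarrow> real \<Rightarrow> real \<Rightarrow> real \<Rightarrow> real \<Rightarrow> real" where
  "Phi1 c t1 t2 p q r =
     (t2 - t1) / (1 - c) * ((c * (p - q)^2 + (1 - c) * (p + q - 2 * r)) /
                            ((1 - c) + c * (p + q - 2 * r)))"

end

theory Submission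
  imports Defs
begin

lemma aux:
  fixes a b c v w :: real
  assumes "b \<noteq> 0" "c \<noteq> 0" "v \<noteq> 0"
  shows "a / b * ((2 * b * w) / (2 * c * v)) = a / c * w / v"
  using assms by (simp add: field_simps)

lemma aux2:
  fixes r r0 K z :: real
  assumes "r \<noteq> r0"
  shows "- K * (z - r) = (r - r0) * (K * (z - r) / (r0 - r))"
proof -
  have "r0 - r \<noteq> 0" using assms by simp
  then have "(r - r0) * (K * (z - r) / (r0 - r)) = -((r0 - r) * (K * (z - r) / (r0 - r)))" by (metis minus_diff_eq mult_minus_left)
  also have "\<dots> = - K * (z - r)" using \<open>r0 - r \<noteq> 0\<close> by simp
  finally show ?thesis by simp
qed

lemma aux3:
  fixes t A c s u :: real
  shows "t / A * (((-(2*A)) * (A + c * u) - (c * s + A * u) * (-(2*c))) / ((A + c * u) * (A + c * u)))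
     = 2 * t * (c^2 * s - A^2) / (A * (A + c * u)^2)"
proof -
  have "(-(2*A)) * (A + c * u) - (c * s + A * u) * (-(2*c)) = 2 * (c^2 * s - A^2)"
    by (simp add: algebra_simps power2_eq_square)
  then show ?thesis by (simp add: power2_eq_square)
qed

theorem proposition2p2:
  fixes c t1 t2 p q :: real
  assumes "0 < c" "c \<le> 1/2"
    and "0 \<le> t1" "t1 \<le> 1 - 2 * c"
    and "t1 + c \<le> t2" "t2 \<le> 1 - c"
    and "0 < p" "p < 1" "0 < q" "q < 1" "p \<noteq> q"
  shows
    "let r0 = (p + q) / 2 + (1 - c) / (2 * c);
         z = (p + q) / 2 + c * (p - q)^2 / (2 * (1 - c));
         f = Phi1 c t1 t2 p q
     in
       {r. (1 - c) + c * (p + q - 2 * r) = 0} = {r0}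
     \<and> (\<exists>L. L \<noteq> 0 \<and> ((\<lambda>r. (r - r0) * f r) \<longlongrightarrow> L) (at r0))
     \<and> min p q < r0
     \<and> {r. r \<noteq> r0 \<and> f r = 0} = {z}
     \<and> min p q < z \<and> z < r0
     \<and> (\<forall>r. r \<noteq> r0 \<longrightarrow>
          (f has_real_derivative
             2 * (t2 - t1) * (c^2 * (p - q)^2 - (1 - c)^2) /
               ((1 - c) * (1 - c + c * (p + q - 2 * r))^2)) (at r)
          \<and> 2 * (t2 - t1) * (c^2 * (p - q)^2 - (1 - c)^2) /
               ((1 - c) * (1 - c + c * (p + q - 2 * r))^2) < 0)
     \<and> (\<forall>x\<in>Lambda p q. \<forall>y\<in>Lambda p q. x < y \<longrightarrow> f y < f x)
     \<and> (\<forall>r\<in>Lambda p q. 0 < f r)"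
proof -
  define r0 where "r0 = (p + q) / 2 + (1 - c) / (2 * c)"
  define z where "z = (p + q) / 2 + c * (p - q)^2 / (2 * (1 - c))"
  define f where "f = Phi1 c t1 t2 p q"
  define K where "K = (t2 - t1) / c"
  have c1: "0 < 1 - c" using assms by simp
  have tpos: "0 < t2 - t1" using assms by simp
  have Kpos: "0 < K" unfolding K_def using tpos assms by simp
  have D: "(1 - c) + c * (p + q - 2 * r) = 2 * c * (r0 - r)" for r
    unfolding r0_def using assms by (simp add: field_simps)
  have N: "c * (p - q)^2 + (1 - c) * (p + q - 2 * r) = 2 * (1 - c) * (z - r)" for r
    unfolding z_def using c1 by (simp add: field_simps)
  have fr: "r \<noteq> r0 \<Longrightarrow> f r = K * (z - r) / (r0 - r)" for r
  proof -
    assume "r \<noteq> r0"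
    then have "r0 - r \<noteq> 0" by simp
    have "f r = (t2 - t1) / (1 - c) * ((2 * (1 - c) * (z - r)) / (2 * c * (r0 - r)))"
      unfolding f_def Phi1_def D N by simp
    also have "\<dots> = K * (z - r) / (r0 - r)"
    proof -
      have a: "1 - c \<noteq> 0" "c \<noteq> 0" using c1 assms by auto
      show ?thesis unfolding K_def using aux[OF a \<open>r0 - r \<noteq> 0\<close>] by simp
    qed
    finally show ?thesis .
  qed
  have pq1: "(p - q)^2 < 1"
  proof -
    have "\<bar>p - q\<bar> < 1" using assms by auto
    then show ?thesis by (simp add: abs_square_less_1)
  qed
  have cc: "c^2 * (p - q)^2 < (1 - c)^2"
  proof -
    have "c^2 * (p-q)^2 < c^2 * 1" using pq1 assms by (intro mult_strict_left_mono) auto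
    also have "\<dots> \<le> (1 - c)^2" using assms by (simp only: mult_1_right, intro power_mono) auto
    finally show ?thesis .
  qed
  have zr0: "z < r0"
  proof -
    have e1: "c * (p - q)^2 / (2 * (1 - c)) = c^2 * (p - q)^2 / (2 * c * (1 - c))"
      using assms c1 by (simp add: power2_eq_square)
    have e2: "(1 - c) / (2 * c) = (1 - c)^2 / (2 * c * (1 - c))"
      using assms c1 by (simp add: power2_eq_square)
    have "c^2 * (p - q)^2 / (2 * c * (1 - c)) < (1 - c)^2 / (2 * c * (1 - c))"
      using cc assms c1 by (intro divide_strict_right_mono) auto
    then have "c * (p - q)^2 / (2 * (1 - c)) < (1 - c) / (2 * c)" using e1 e2 by simp
    then show ?thesis unfolding z_def r0_def by simp
  qed
  have mz: "min p q < z"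
  proof -
    have "min p q < (p + q) / 2" using assms by (auto simp: min_def)
    moreover have "0 \<le> c * (p - q)^2 / (2 * (1 - c))" using assms c1 by simp
    ultimately show ?thesis unfolding z_def by linarith
  qed
  have mr0: "min p q < r0" using mz zr0 by simp
  have Lam: "r \<in> Lambda p q \<Longrightarrow> r < min p q" for r unfolding Lambda_def by simp
  have P1: "{r. (1 - c) + c * (p + q - 2 * r) = 0} = {r0}"
    using D assms by auto
  have P2: "\<exists>L. L \<noteq> 0 \<and> ((\<lambda>r. (r - r0) * f r) \<longlongrightarrow> L) (at r0)"
  proof (intro exI conjI)
    show "- K * (z - r0) \<noteq> 0" using Kpos zr0 by simp
    have "((\<lambda>r. - K * (z - r)) \<longlongrightarrow> - K * (z - r0)) (at r0)"
      by (intro tendsto_intros)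
    moreover have "\<forall>\<^sub>F r in at r0. - K * (z - r) = (r - r0) * f r"
      unfolding eventually_at_filter
      by (rule always_eventually) (auto simp: fr field_simps)
    ultimately show "((\<lambda>r. (r - r0) * f r) \<longlongrightarrow> - K * (z - r0)) (at r0)"
      by (rule Lim_transform_eventually)
  qed
  have P4: "{r. r \<noteq> r0 \<and> f r = 0} = {z}"
    using fr Kpos zr0 by auto
  have Dneg: "2 * (t2 - t1) * (c^2 * (p - q)^2 - (1 - c)^2) /
               ((1 - c) * (1 - c + c * (p + q - 2 * r))^2) < 0" if "r \<noteq> r0" for r
  proof -
    have "(1 - c + c * (p + q - 2 * r)) \<noteq> 0" using D that assms by simp
    then have "0 < (1 - c) * (1 - c + c * (p + q - 2 * r))^2" using c1 by simp
    moreover have "2 * (t2 - t1) * (c^2 * (p - q)^2 - (1 - c)^2) < 0"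
      using tpos cc by (simp add: mult_pos_neg)
    ultimately show ?thesis by (simp add: divide_neg_pos)
  qed
  have Der: "(f has_real_derivative
             2 * (t2 - t1) * (c^2 * (p - q)^2 - (1 - c)^2) /
               ((1 - c) * (1 - c + c * (p + q - 2 * r))^2)) (at r)" if "r \<noteq> r0" for r
  proof -
    have nz: "(1 - c + c * (p + q - 2 * r)) \<noteq> 0" using D that assms by simp
    have dN: "((\<lambda>r. c * (p - q)^2 + (1 - c) * (p + q - 2 * r)) has_real_derivative (-(2*(1-c)))) (at r)"
      by (auto intro!: derivative_eq_intros)
    have dD: "((\<lambda>r. (1 - c) + c * (p + q - 2 * r)) has_real_derivative (-(2*c))) (at r)"
      by (auto intro!: derivative_eq_intros)
    have "((\<lambda>r. (t2 - t1) / (1 - c) * ((c * (p - q)^2 + (1 - c) * (p + q - 2 * r)) /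
                            ((1 - c) + c * (p + q - 2 * r)))) has_real_derivative
       (t2 - t1) / (1 - c) * (((-(2*(1-c))) * ((1 - c) + c * (p + q - 2 * r)) - (c * (p - q)^2 + (1 - c) * (p + q - 2 * r)) * (-(2*c)))
        / (((1 - c) + c * (p + q - 2 * r)) * ((1 - c) + c * (p + q - 2 * r))))) (at r)"
      by (rule DERIV_cmult, rule DERIV_divide[OF dN dD]) (use nz in simp)
    moreover have "(t2 - t1) / (1 - c) * (((-(2*(1-c))) * ((1 - c) + c * (p + q - 2 * r)) - (c * (p - q)^2 + (1 - c) * (p + q - 2 * r)) * (-(2*c)))
        / (((1 - c) + c * (p + q - 2 * r)) * ((1 - c) + c * (p + q - 2 * r)))) =
        2 * (t2 - t1) * (c^2 * (p - q)^2 - (1 - c)^2) /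
               ((1 - c) * (1 - c + c * (p + q - 2 * r))^2)"
      by (rule aux3)
    ultimately show ?thesis unfolding f_def Phi1_def[abs_def] by simp
  qed
  have Mono: "\<forall>x\<in>Lambda p q. \<forall>y\<in>Lambda p q. x < y \<longrightarrow> f y < f x"
  proof (intro ballI impI)
    fix x y assume xy: "x \<in> Lambda p q" "y \<in> Lambda p q" "x < y"
    have "y < r0" using Lam[OF xy(2)] mr0 by linarith
    show "f y < f x"
    proof (rule DERIV_neg_imp_decreasing[OF xy(3)])
      fix t assume "x \<le> t" "t \<le> y"
      then have "t \<noteq> r0" using \<open>y < r0\<close> by simp
      then show "\<exists>y. (f has_real_derivative y) (at t) \<and> y < 0"
        using Der Dneg by blast
    qed
  qed
  have Pos: "\<forall>r\<in>Lambda p q. 0 < f r"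
  proof
    fix r assume "r \<in> Lambda p q"
    then have "r < z" using Lam mz by force
    then show "0 < f r" using fr[of r] zr0 Kpos by simp
  qed
  show ?thesis
    unfolding Let_def r0_def[symmetric] z_def[symmetric] f_def[symmetric]
    using P1 P2 mr0 P4 mz zr0 Der Dneg Mono Pos by blast
qed

end
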